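(* There exist no positive integers $a,b$ with $1\le a\le b$ such that every nonnegative integer can be written as $ax^2+by^2+5(z^2+zw+w^2)$ with $x,y,z,w\in\mathbb{Z}$. *)

theory Defs
  imports Main
begin

end

theory Submission
  imports Defs
begin

lemma Qnn: "(z::int)^2 + z*w + w^2 \<ge> 0"
proof -
  have e: "4*(z^2 + z*w + w^2) = (2*z+w)^2 + 3*w^2" by (simp add: power2_eq_square algebra_simps)
  have "0 \<le> 4*(z^2 + z*w + w^2)" unfolding e by simp
  then show ?thesis by simp
qed

lemma sqbound: assumes "(x::int)^2 < 16" shows "x \<in> {-3..3}"
proof (rule ccontr)
  assume "x \<notin> {-3..3}"
  then have "\<bar>x\<bar> \<ge> 4" by auto
  then have "\<bar>x\<bar>*\<bar>x\<bar> \<ge> 4*4" by (meson mult_mono order_trans zero_le_numeral)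
  then show False using assms by (simp add: power2_eq_square abs_mult[symmetric])
qed

lemma sq_ge: "(x::int) \<noteq> 0 \<Longrightarrow> x^2 \<ge> 1"
proof -
  assume "x \<noteq> 0"
  then have "x^2 > 0" by simp
  then show ?thesis by linarith
qed

lemma Q2: "(z::int)^2 + z*w + w^2 \<noteq> 2"
proof
  assume h: "z^2 + z*w + w^2 = 2"
  have e: "4*(z^2 + z*w + w^2) = (2*z+w)^2 + 3*w^2" by (simp add: power2_eq_square algebra_simps)
  have "w^2 < 16" using e h by (smt (verit) zero_le_power2)
  moreover have "(2*z+w)^2 < 16" using e h by (smt (verit) zero_le_power2)
  ultimately have "w \<in> {-3..3}" "2*z+w \<in> {-3..3}" using sqbound by auto
  then have "z \<in> {-3..3}" "w \<in> {-3..3}" by auto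
  then have "z \<in> {-3,-2,-1,0,1,2,3}" "w \<in> {-3,-2,-1,0,1,2,3}" by auto
  then show False using h by (auto simp: power2_eq_square)
qed

theorem theorem7p1:
  shows "\<not> (\<exists>a b :: int. 1 \<le> a \<and> a \<le> b \<and>
           (\<forall>n :: int. n \<ge> 0 \<longrightarrow>
              (\<exists>x y z w :: int. n = a * x^2 + b * y^2 + 5 * (z^2 + z * w + w^2))))"
proof
  assume "\<exists>a b :: int. 1 \<le> a \<and> a \<le> b \<and>
           (\<forall>n :: int. n \<ge> 0 \<longrightarrow>
              (\<exists>x y z w :: int. n = a * x^2 + b * y^2 + 5 * (z^2 + z * w + w^2)))"
  then obtain a b :: int where ab: "1 \<le> a" "a \<le> b" and
    R: "\<And>n. n \<ge> 0 \<Longrightarrow> \<exists>x y z w :: int. n = a * x^2 + b * y^2 + 5 * (z^2 + z * w + w^2)"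
    by blast
  have a1: "a = 1"
  proof -
    obtain x y z w :: int where h: "1 = a * x^2 + b * y^2 + 5 * (z^2 + z * w + w^2)" using R[of 1] by auto
    have q: "z^2 + z * w + w^2 \<ge> 0" by (rule Qnn)
    have ax: "a*x^2 \<ge> 0" "b*y^2 \<ge> 0" using ab by auto
    show ?thesis
    proof (cases "x = 0")
      case True
      have "y \<noteq> 0"
      proof
        assume "y = 0"
        then have "1 = 5*(z^2 + z * w + w^2)" using h True by simp
        then have "(5::int) dvd 1" by (metis dvd_triv_left)
        then show False by simp
      qed
      then have "b*y^2 \<ge> b*1" using sq_ge ab by (intro mult_left_mono) auto
      then have "b*y^2 \<ge> b" by simp
      then show ?thesis using h q ax ab by (smt (verit))
    next
      case False
      then have "a*x^2 \<ge> a*1" using sq_ge ab by (intro mult_left_mono) auto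
      then have "a*x^2 \<ge> a" by simp
      then show ?thesis using h q ax ab by (smt (verit))
    qed
  qed
  have b12: "b = 1 \<or> b = 2"
  proof -
    obtain x y z w :: int where h: "2 = a * x^2 + b * y^2 + 5 * (z^2 + z * w + w^2)" using R[of 2] by auto
    have q: "z^2 + z * w + w^2 \<ge> 0" by (rule Qnn)
    have ax: "x^2 \<ge> 0" "b*y^2 \<ge> 0" using ab by auto
    have q0: "z^2 + z * w + w^2 = 0" using h[unfolded a1] q ax by (smt (verit))
    have "y \<noteq> 0"
    proof
      assume "y = 0"
      then have "x^2 = 2" using h q0 a1 by simp
      then have "x \<in> {-3..3}" using sqbound by auto
      then have "x \<in> {-3,-2,-1,0,1,2,3}" by auto
      then show False using \<open>x^2 = 2\<close> by auto
    qed
    then have "b*y^2 \<ge> b*1" using sq_ge ab by (intro mult_left_mono) auto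
      then have "b*y^2 \<ge> b" by simp
    then show ?thesis using h[unfolded a1] q0 ax ab a1 by (smt (verit))
  qed
  show False
  proof (cases "b = 1")
    case True
    obtain x y z w :: int where h: "3 = a * x^2 + b * y^2 + 5 * (z^2 + z * w + w^2)" using R[of 3] by auto
    have q: "z^2 + z * w + w^2 \<ge> 0" by (rule Qnn)
    have ax: "x^2 \<ge> 0" "y^2 \<ge> 0" by auto
    have q0: "z^2 + z * w + w^2 = 0" using h[unfolded a1 True] q ax by (smt (verit))
    have e: "x^2 + y^2 = 3" using h q0 a1 True by simp
    then have "x^2 < 16" "y^2 < 16" using ax by linarith+
    then have "x \<in> {-3..3}" "y \<in> {-3..3}" using sqbound by auto
    then have "x \<in> {-3,-2,-1,0,1,2,3}" "y \<in> {-3,-2,-1,0,1,2,3}" by auto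
    then show False using e by (auto simp: power2_eq_square)
  next
    case False
    then have b2: "b = 2" using b12 by auto
    obtain x y z w :: int where h: "10 = a * x^2 + b * y^2 + 5 * (z^2 + z * w + w^2)" using R[of 10] by auto
    have q: "z^2 + z * w + w^2 \<ge> 0" by (rule Qnn)
    have ax: "x^2 \<ge> 0" "y^2 \<ge> 0" by auto
    have q2: "z^2 + z * w + w^2 \<noteq> 2" by (rule Q2)
    have "z^2 + z * w + w^2 \<le> 2" using h[unfolded a1 b2] q ax by (smt (verit))
    then have "z^2 + z * w + w^2 = 0 \<or> z^2 + z * w + w^2 = 1" using q q2 by (smt (verit))
    then have e: "x^2 + 2*y^2 = 10 \<or> x^2 + 2*y^2 = 5" using h a1 b2 by auto
    then have "x^2 < 16" "y^2 < 16" using ax by linarith+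
    then have "x \<in> {-3..3}" "y \<in> {-3..3}" using sqbound by auto
    then have "x \<in> {-3,-2,-1,0,1,2,3}" "y \<in> {-3,-2,-1,0,1,2,3}" by auto
    then show False using e by (auto simp: power2_eq_square)
  qed
qed

end
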